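(* Let $x_1,\dots,x_m \in \mathbb{S}^{n-1}$ be observations (unit vectors in $\mathbb{R}^n$), and consider the maximum likelihood problem of minimizing $\log\det\Sigma + \frac{n}{m}\sum_{i=1}^m \log(x_i^T\Sigma^{-1}x_i)$ over positive definite $\Sigma \in \mathbb{R}^{n\times n}$ (the ML problem for the angular central Gaussian distribution with density $p(x;\Sigma) = \frac{\Gamma(n/2)}{2\pi^{n/2}\sqrt{\det\Sigma}}(x^T\Sigma^{-1}x)^{-n/2}$ on $\mathbb{S}^{n-1}$). Consider the latent variable model in which the pair $(X,R) \in \mathbb{S}^{n-1}\times\mathbb{R}_+$ has joint density $$p(x,r;\Sigma) = \frac{r^{n-1}}{(2\pi)^{n/2}\sqrt{\det\Sigma}}\exp\!\left(-\frac{r^2}{2}x^T\Sigma^{-1}x\right),$$ with $R$ the latent (unobserved) variable, the pairs $(x_i,R_i)$ independent. Then the EM algorithm obtained from this latent variable model is equivalent to Tyler's fixed-point iteration: given the current iterate $\Sigma_k$, the EM update is $$\Sigma_{k+1} = \frac{n}{m}\sum_{i=1}^m \frac{1}{x_i^T\Sigma_k^{-1}x_i}\, x_i x_i^T .$$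
   Context: The EM algorithm for this model is defined as follows: given the current estimate $\Sigma_k$, the next estimate is $\Sigma_{k+1} = \arg\max_{\Sigma} \sum_{i=1}^m \mathbb{E}_{R_i \mid x_i, \Sigma_k}[\log p(x_i, R_i; \Sigma)]$, where the expectation is over the conditional distribution of $R_i$ given $X_i = x_i$ under the model with parameter $\Sigma_k$, and the maximization is over positive definite $\Sigma$. *)

theory Defs
  imports "HOL-Analysis.Analysis"
begin

definition pos_def :: "real^'n^'n \<Rightarrow> bool" where
  "pos_def S \<longleftrightarrow> transpose S = S \<and> (\<forall>v. v \<noteq> 0 \<longrightarrow> v \<bullet> (S *v v) > 0)"

definition lv_joint :: "real^'n^'n \<Rightarrow> real^'n \<Rightarrow> real \<Rightarrow> real" where
  "lv_joint S x r =
     r ^ (CARD('n) - 1) / ((2 * pi) powr (real CARD('n) / 2) * sqrt (det S))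
     * exp (- (r\<^sup>2 / 2) * (x \<bullet> (matrix_inv S *v x)))"

definition lv_cond :: "real^'n^'n \<Rightarrow> real^'n \<Rightarrow> real \<Rightarrow> real" where
  "lv_cond S x r = lv_joint S x r / (LINT t:{0<..}|lborel. lv_joint S x t)"

definition em_Q :: "(nat \<Rightarrow> real^'n) \<Rightarrow> nat \<Rightarrow> real^'n^'n \<Rightarrow> real^'n^'n \<Rightarrow> real" where
  "em_Q x m Sk S = (\<Sum>i<m. LINT r:{0<..}|lborel. lv_cond Sk (x i) r * ln (lv_joint S (x i) r))"

definition is_em_update :: "(nat \<Rightarrow> real^'n) \<Rightarrow> nat \<Rightarrow> real^'n^'n \<Rightarrow> real^'n^'n \<Rightarrow> bool" where
  "is_em_update x m Sk S \<longleftrightarrow>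
     pos_def S \<and> (\<forall>S'. pos_def S' \<longrightarrow> em_Q x m Sk S' \<le> em_Q x m Sk S)"

definition tyler_step :: "(nat \<Rightarrow> real^'n) \<Rightarrow> nat \<Rightarrow> real^'n^'n \<Rightarrow> real^'n^'n" where
  "tyler_step x m Sk = (real CARD('n) / real m) *\<^sub>R
     (\<Sum>i<m. (1 / (x i \<bullet> (matrix_inv Sk *v x i))) *\<^sub>R (\<chi> a b. x i $ a * x i $ b))"

end

theory Submission imports Defs "HOL-Probability.Distributions" begin


lemma sym_dot:
  fixes A :: "real^'n^'n"
  assumes "transpose A = A"
  shows "u \<bullet> (A *v w) = (A *v u) \<bullet> w"
proof -
  have "u \<bullet> (A *v w) = (u v* A) \<bullet> w" by (simp add: dot_lmul_matrix)
  also have "u v* A = transpose A *v u" by (simp add: transpose_matrix_vector)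
  finally show ?thesis using assms by simp
qed

lemma eigen_exists:
  fixes A :: "real^'n^'n"
  assumes sym: "transpose A = A" and W: "subspace W"
    and inv: "\<And>w. w \<in> W \<Longrightarrow> A *v w \<in> W" and ne: "\<not> W \<subseteq> {0}"
  shows "\<exists>v\<in>W. norm v = 1 \<and> A *v v = (v \<bullet> (A *v v)) *\<^sub>R v"
proof -
  define f where "f u = u \<bullet> (A *v u)" for u
  let ?S = "W \<inter> sphere 0 1"
  have cpt: "compact ?S"
    using closed_subspace[OF W] compact_sphere by (rule closed_Int_compact)
  obtain w0 where w0: "w0 \<in> W" "w0 \<noteq> 0" using ne by auto
  have "w0 /\<^sub>R norm w0 \<in> ?S" using w0 W by (simp add: subspace_scale)
  then have Sne: "?S \<noteq> {}" by blast
  have cont: "continuous_on ?S f" unfolding f_def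
    by (intro continuous_intros linear_continuous_on matrix_vector_mul_bounded_linear)
  obtain v where v: "v \<in> ?S" and vmax: "\<And>y. y \<in> ?S \<Longrightarrow> f y \<le> f v"
    using continuous_attains_sup[OF cpt Sne cont] by blast
  define l where "l = f v"
  have vW: "v \<in> W" and nv: "norm v = 1" using v by auto
  have vv: "v \<bullet> v = 1" using nv by (simp add: dot_square_norm)
  have fscale: "f (c *\<^sub>R u) = c^2 * f u" for c u
    by (simp add: f_def matrix_vector_mult_scaleR power2_eq_square)
  have le: "f u \<le> l * (u \<bullet> u)" if uW: "u \<in> W" for u
  proof (cases "u = 0")
    case True then show ?thesis by (simp add: f_def)
  next
    case False
    then have nu: "norm u > 0" by simp
    have "u /\<^sub>R norm u \<in> ?S" using uW W False by (simp add: subspace_scale)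
    then have "f (u /\<^sub>R norm u) \<le> l" using vmax l_def by blast
    then have "f u / (norm u)^2 \<le> l" by (simp add: fscale power_divide divide_inverse mult.commute power_inverse)
    then have "f u \<le> l * (norm u)^2" using nu by (simp add: divide_le_eq mult.commute)
    then show ?thesis by (simp add: dot_square_norm)
  qed
  define w where "w = A *v v - l *\<^sub>R v"
  have wW: "w \<in> W" unfolding w_def using inv[OF vW] vW W by (simp add: subspace_diff subspace_scale)
  have lv: "l = v \<bullet> (A *v v)" by (simp add: l_def f_def)
  have vw: "v \<bullet> w = 0" unfolding w_def by (simp add: inner_diff_right lv vv)
  have wv: "w \<bullet> v = 0" using vw by (simp add: inner_commute)
  define c where "c = w \<bullet> w"
  define d where "d = f w - l * c"
  have key: "2 * t * c + t^2 * d \<le> 0" for t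
  proof -
    have uW: "v + t *\<^sub>R w \<in> W" using vW wW W by (simp add: subspace_add subspace_scale)
    have Av: "A *v v = w + l *\<^sub>R v" by (simp add: w_def)
    have vAw: "v \<bullet> (A *v w) = w \<bullet> (A *v v)"
      using sym_dot[OF sym, of v w] by (simp add: inner_commute)
    have wAv: "w \<bullet> (A *v v) = c" by (simp add: Av c_def inner_add_right wv)
    have "f (v + t *\<^sub>R w) = l + 2 * t * c + t^2 * f w"
      unfolding f_def using vAw wAv
      by (simp add: matrix_vector_right_distrib matrix_vector_mult_scaleR inner_add_left inner_add_right
          power2_eq_square lv f_def algebra_simps)
    moreover have "(v + t *\<^sub>R w) \<bullet> (v + t *\<^sub>R w) = 1 + t^2 * c"
      by (simp add: inner_add_left inner_add_right vv vw wv c_def power2_eq_square)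
    ultimately have "l + 2 * t * c + t^2 * f w \<le> l * (1 + t^2 * c)" using le[OF uW] by simp
    then show ?thesis by (simp add: d_def algebra_simps)
  qed
  have c0: "c = 0"
  proof -
    define s where "s = 1 / (\<bar>d\<bar> + 1)"
    have s0: "s > 0" by (simp add: s_def add_pos_nonneg)
    have sd: "s * \<bar>d\<bar> < 1" unfolding s_def by (simp add: divide_less_eq)
    have "2 * (c * s) * c + (c * s)^2 * d \<le> 0" by (rule key)
    then have "c^2 * s * (2 + s * d) \<le> 0" by (simp add: power2_eq_square algebra_simps)
    moreover have "2 + s * d > 0"
    proof -
      have "- \<bar>d\<bar> \<le> d" by simp
      then have "s * (- \<bar>d\<bar>) \<le> s * d" using s0 by (intro mult_left_mono) auto
      then have "s * d \<ge> - (s * \<bar>d\<bar>)" by simp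
      then show ?thesis using sd by linarith
    qed
    ultimately have "c^2 * s \<le> 0" by (simp add: mult_le_0_iff)
    then have "c^2 \<le> 0" using s0 by (simp add: mult_le_0_iff)
    then show ?thesis by simp
  qed
  then have "w = 0" by (simp add: c_def)
  then have "A *v v = l *\<^sub>R v" by (simp add: w_def)
  then show ?thesis using vW nv lv by blast
qed

lemma eigen_basis_sub:
  fixes A :: "real^'n^'n"
  assumes sym: "transpose A = A"
  shows "subspace W \<Longrightarrow> (\<forall>w\<in>W. A *v w \<in> W) \<Longrightarrow>
    \<exists>B. B \<subseteq> W \<and> pairwise orthogonal B \<and> (\<forall>b\<in>B. norm b = 1 \<and> A *v b = (b \<bullet> (A *v b)) *\<^sub>R b) \<and> W \<subseteq> span B"
proof (induction "dim W" arbitrary: W rule: less_induct)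
  case less
  show ?case
  proof (cases "W \<subseteq> {0}")
    case True then show ?thesis by (intro exI[of _ "{}"]) auto
  next
    case False
    obtain v where vW: "v \<in> W" and nv: "norm v = 1" and Av: "A *v v = (v \<bullet> (A *v v)) *\<^sub>R v"
      using eigen_exists[OF sym less.prems(1) _ False] less.prems(2) by blast
    define l where "l = v \<bullet> (A *v v)"
    have vv: "v \<bullet> v = 1" using nv by (simp add: dot_square_norm)
    define W' where "W' = W \<inter> {w. v \<bullet> w = 0}"
    have sW': "subspace W'" unfolding W'_def
      by (intro subspace_inter less.prems(1) subspace_hyperplane)
    have invW': "\<forall>w\<in>W'. A *v w \<in> W'"
    proof
      fix w assume w: "w \<in> W'"
      have "v \<bullet> (A *v w) = (A *v v) \<bullet> w" by (rule sym_dot[OF sym])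
      also have "\<dots> = l * (v \<bullet> w)" using Av l_def by (metis inner_scaleR_left)
      also have "\<dots> = 0" using w by (simp add: W'_def)
      finally show "A *v w \<in> W'" using w less.prems(2) by (simp add: W'_def)
    qed
    have "v \<notin> W'" using vv by (simp add: W'_def)
    moreover have "W' \<subseteq> W" by (auto simp: W'_def)
    ultimately have "W' \<subset> W" using vW by blast
    then have "span W' \<subset> span W" using sW' less.prems(1) by (metis span_eq_iff)
    then have "dim W' < dim W" by (rule dim_psubset)
    then obtain B' where B'W: "B' \<subseteq> W'" and B'o: "pairwise orthogonal B'"
       and B'e: "\<forall>b\<in>B'. norm b = 1 \<and> A *v b = (b \<bullet> (A *v b)) *\<^sub>R b" and B's: "W' \<subseteq> span B'"
      using less.hyps[OF _ sW' invW'] by blast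
    define B where "B = insert v B'"
    have "B \<subseteq> W" using B'W vW by (auto simp: B_def W'_def)
    moreover have "pairwise orthogonal B"
      unfolding B_def pairwise_insert using B'o B'W
      by (auto simp: W'_def orthogonal_def inner_commute)
    moreover have "\<forall>b\<in>B. norm b = 1 \<and> A *v b = (b \<bullet> (A *v b)) *\<^sub>R b"
      using B'e nv Av by (auto simp: B_def)
    moreover have "W \<subseteq> span B"
    proof
      fix w assume w: "w \<in> W"
      define w' where "w' = w - (v \<bullet> w) *\<^sub>R v"
      have "w' \<in> W" unfolding w'_def using w vW less.prems(1) by (simp add: subspace_diff subspace_scale)
      moreover have "v \<bullet> w' = 0" by (simp add: w'_def inner_diff_right vv)
      ultimately have "w' \<in> W'" by (simp add: W'_def)
      then have "w' \<in> span B" using B's span_mono[of B' B] by (auto simp: B_def)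
      moreover have "(v \<bullet> w) *\<^sub>R v \<in> span B" by (simp add: B_def span_base span_scale)
      ultimately have "w' + (v \<bullet> w) *\<^sub>R v \<in> span B" by (rule span_add)
      then show "w \<in> span B" by (simp add: w'_def)
    qed
    ultimately show ?thesis by blast
  qed
qed

definition diagm :: "real^'n \<Rightarrow> real^'n^'n" where
  "diagm d = (\<chi> i j. if i = j then d $ i else 0)"

lemma spectral:
  fixes A :: "real^'n^'n"
  assumes sym: "transpose A = A"
  shows "\<exists>U d. orthogonal_matrix U \<and> A = U ** diagm d ** transpose U \<and>
     (\<forall>j. norm (column j U) = 1 \<and> d $ j = column j U \<bullet> (A *v column j U))"
proof -
  obtain B where Bo: "pairwise orthogonal B"
     and Be: "\<forall>b\<in>B. norm b = 1 \<and> A *v b = (b \<bullet> (A *v b)) *\<^sub>R b" and Bs: "UNIV \<subseteq> span B"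
    using eigen_basis_sub[OF sym, of UNIV] by auto
  have "0 \<notin> B" using Be by force
  then have indB: "independent B" using Bo pairwise_orthogonal_independent by blast
  then have fB: "finite B" using independent_bound by blast
  have "span B = UNIV" using Bs by auto
  then have "dim (UNIV :: (real^'n) set) = card B"
    using dim_span[of B] dim_eq_card_independent[OF indB] by simp
  then have cB: "card B = CARD('n)" by simp
  obtain f where f: "bij_betw f (UNIV :: 'n set) B"
    using bij_betw_iff_card[of "UNIV :: 'n set" B] fB cB by auto
  define U :: "real^'n^'n" where "U = (\<chi> i j. f j $ i)"
  define d :: "real^'n" where "d = (\<chi> j. f j \<bullet> (A *v f j))"
  have colU: "column j U = f j" for j by (simp add: U_def column_def vec_eq_iff)
  have fB': "f j \<in> B" for j using f by (auto simp: bij_betw_def)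
  have inner_f: "f i \<bullet> f j = (if i = j then 1 else 0)" for i j
  proof (cases "i = j")
    case True then show ?thesis using Be fB'[of j] by (simp add: dot_square_norm)
  next
    case False
    then have "f i \<noteq> f j" using f by (auto simp: bij_betw_def inj_on_def)
    then show ?thesis using Bo fB'[of i] fB'[of j] False by (auto simp: pairwise_def orthogonal_def)
  qed
  have sumf: "(\<Sum>k\<in>UNIV. f i $ k * f j $ k) = f i \<bullet> f j" for i j by (simp add: inner_vec_def)
  have "transpose U ** U = mat 1"
    by (simp add: vec_eq_iff matrix_matrix_mult_def transpose_def U_def mat_def sumf inner_f)
  then have oU: "orthogonal_matrix U" by (simp add: orthogonal_matrix)
  have eig: "A *v f j = d $ j *\<^sub>R f j" for j using Be fB'[of j] by (simp add: d_def)
  have "A ** U = U ** diagm d"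
  proof -
    have "(A ** U) $ i $ j = (U ** diagm d) $ i $ j" for i j
    proof -
      have "(A ** U) $ i $ j = (A *v f j) $ i"
        by (simp add: matrix_matrix_mult_def matrix_vector_mult_def U_def)
      also have "\<dots> = d $ j * f j $ i" by (simp add: eig)
      also have "\<dots> = (U ** diagm d) $ i $ j"
        by (simp add: matrix_matrix_mult_def diagm_def U_def if_distrib cong: if_cong)
      finally show ?thesis .
    qed
    then show ?thesis by (simp add: vec_eq_iff)
  qed
  moreover have "U ** transpose U = mat 1" using oU by (simp add: orthogonal_matrix_def)
  ultimately have "A = U ** diagm d ** transpose U"
    by (metis matrix_mul_assoc matrix_mul_rid)
  moreover have "\<forall>j. norm (column j U) = 1 \<and> d $ j = column j U \<bullet> (A *v column j U)"
    using Be fB' by (simp add: colU d_def)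
  ultimately show ?thesis using oU by blast
qed




lemma matrix_inv_props:
  fixes A :: "real^'n^'n"
  assumes "invertible A"
  shows "A ** matrix_inv A = mat 1" "matrix_inv A ** A = mat 1"
proof -
  have "\<exists>A'. A ** A' = mat 1 \<and> A' ** A = mat 1" using assms by (simp add: invertible_def)
  then have "A ** matrix_inv A = mat 1 \<and> matrix_inv A ** A = mat 1"
    unfolding matrix_inv_def by (rule someI_ex)
  then show "A ** matrix_inv A = mat 1" "matrix_inv A ** A = mat 1" by auto
qed

lemma transpose_dot:
  fixes R :: "real^'n^'n"
  shows "v \<bullet> (transpose R *v w) = (R *v v) \<bullet> w"
  by (metis dot_lmul_matrix inner_commute transpose_matrix_vector)

lemma sum_delta_mult: "(\<Sum>k\<in>UNIV. (if (i::'n::finite) = k then x else 0) * f k) = (x * f i :: real)"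
proof -
  have "(\<lambda>k. (if i = k then x else 0) * f k) = (\<lambda>k. if k = i then x * f i else 0)" by auto
  then show ?thesis by (simp only:) (simp add: sum.delta)
qed

lemma diagm_mult: "diagm a ** diagm b = diagm (\<chi> i. a $ i * b $ i)"
  by (simp add: vec_eq_iff matrix_matrix_mult_def diagm_def sum_delta_mult)

lemma transpose_diagm: "transpose (diagm a) = diagm a"
  by (simp add: vec_eq_iff transpose_def diagm_def)

lemma det_diagm: "det (diagm a) = (\<Prod>i\<in>UNIV. a $ i)"
  by (subst det_diagonal) (auto simp: diagm_def)

lemma trace_diagm: "trace (diagm a) = (\<Sum>i\<in>UNIV. a $ i)"
  by (simp add: trace_def diagm_def)

lemma orth_det_sq: "orthogonal_matrix (U::real^'n^'n) \<Longrightarrow> det U * det U = 1"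
  using det_orthogonal_matrix[of U] by auto

lemma pos_spectral:
  fixes A :: "real^'n^'n"
  assumes "pos_def A"
  shows "\<exists>U d. orthogonal_matrix U \<and> A = U ** diagm d ** transpose U \<and> (\<forall>j. d $ j > 0)"
proof -
  obtain U d where oU: "orthogonal_matrix U" and A: "A = U ** diagm d ** transpose U"
    and dj: "\<forall>j. norm (column j U) = 1 \<and> d $ j = column j U \<bullet> (A *v column j U)"
    using spectral[of A] assms by (auto simp: pos_def_def)
  have "d $ j > 0" for j
  proof -
    have "column j U \<noteq> 0" using dj by (metis norm_zero zero_neq_one)
    then show ?thesis using dj assms by (simp add: pos_def_def)
  qed
  then show ?thesis using oU A by blast
qed

lemma det_spectral:
  assumes "orthogonal_matrix U"
  shows "det (U ** diagm d ** transpose U) = (\<Prod>i\<in>UNIV. d $ i)"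
  using orth_det_sq[OF assms] by (simp add: det_mul det_diagm)

lemma trace_spectral:
  assumes "orthogonal_matrix U"
  shows "trace (U ** diagm d ** transpose U) = (\<Sum>i\<in>UNIV. d $ i)"
proof -
  have "trace (U ** diagm d ** transpose U) = trace (U ** (diagm d ** transpose U))"
    by (simp add: matrix_mul_assoc)
  also have "\<dots> = trace ((diagm d ** transpose U) ** U)" by (rule trace_mul_sym)
  also have "\<dots> = trace (diagm d)" using assms
    by (simp add: matrix_mul_assoc[symmetric] orthogonal_matrix_def)
  finally show ?thesis by (simp add: trace_diagm)
qed

lemma pos_def_det_pos:
  fixes A :: "real^'n^'n"
  assumes "pos_def A" shows "det A > 0"
proof -
  obtain U d where oU: "orthogonal_matrix U" and A: "A = U ** diagm d ** transpose U" and d: "\<forall>j. d $ j > 0"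
    using pos_spectral[OF assms] by blast
  show ?thesis using d by (simp add: A det_spectral[OF oU] prod_pos)
qed

lemma pos_def_invertible:
  fixes A :: "real^'n^'n"
  assumes "pos_def A" shows "invertible A"
  using pos_def_det_pos[OF assms] by (simp add: invertible_det_nz)

lemma pos_def_inv:
  fixes S :: "real^'n^'n"
  assumes S: "pos_def S"
  shows "pos_def (matrix_inv S)" "det (matrix_inv S) = 1 / det S"
proof -
  let ?P = "matrix_inv S"
  have iS: "invertible S" by (rule pos_def_invertible[OF S])
  note SP = matrix_inv_props[OF iS]
  have tS: "transpose S = S" using S by (simp add: pos_def_def)
  have "transpose ?P ** S = mat 1"
    by (metis SP(1) matrix_transpose_mul tS transpose_mat)
  then have tP: "transpose ?P = ?P"
    by (metis SP(1) matrix_mul_assoc matrix_mul_lid matrix_mul_rid)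
  have "v \<bullet> (?P *v v) > 0" if v: "v \<noteq> 0" for v
  proof -
    define w where "w = ?P *v v"
    have Sw: "S *v w = v" by (simp add: w_def matrix_vector_mul_assoc SP(1))
    then have "w \<noteq> 0" using v by auto
    then have "w \<bullet> (S *v w) > 0" using S by (simp add: pos_def_def)
    then show ?thesis using Sw by (simp add: w_def inner_commute)
  qed
  then show "pos_def ?P" using tP by (simp add: pos_def_def)
  have "det S * det ?P = 1" using SP(1) by (metis det_I det_mul)
  then show "det ?P = 1 / det S" using pos_def_det_pos[OF S] by (simp add: field_simps)
qed

lemma logdet_le:
  fixes M :: "real^'n^'n"
  assumes "pos_def M"
  shows "ln (det M) \<le> trace M - real CARD('n)"
    and "ln (det M) = trace M - real CARD('n) \<Longrightarrow> M = mat 1"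
proof -
  obtain U d where oU: "orthogonal_matrix U" and A: "M = U ** diagm d ** transpose U" and d: "\<forall>j. d $ j > 0"
    using pos_spectral[OF assms] by blast
  have dnz: "d $ i \<noteq> 0" for i using d[rule_format, of i] by simp
  have ldet: "ln (det M) = (\<Sum>i\<in>UNIV. ln (d $ i))"
    unfolding A det_spectral[OF oU] by (rule ln_prod) (use dnz in auto)
  have tr: "trace M - real CARD('n) = (\<Sum>i\<in>UNIV. d $ i - 1)"
    by (simp add: A trace_spectral[OF oU] sum_subtractf)
  have each: "ln (d $ i) \<le> d $ i - 1" for i using d ln_le_minus_one by blast
  show "ln (det M) \<le> trace M - real CARD('n)"
    unfolding ldet tr by (intro sum_mono each)
  assume eq: "ln (det M) = trace M - real CARD('n)"
  then have "(\<Sum>i\<in>UNIV. (d $ i - 1) - ln (d $ i)) = 0"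
    unfolding ldet tr by (simp add: sum_subtractf)
  then have "\<forall>i\<in>UNIV. (d $ i - 1) - ln (d $ i) = 0"
    using each by (subst (asm) sum_nonneg_eq_0_iff) auto
  then have "\<forall>i. d $ i = 1" using d ln_eq_minus_one by force
  then have "diagm d = mat 1" by (simp add: vec_eq_iff diagm_def mat_def)
  then show "M = mat 1" using oU by (simp add: A orthogonal_matrix_def)
qed

lemma pos_def_sqrt:
  fixes P :: "real^'n^'n"
  assumes "pos_def P"
  shows "\<exists>R::real^'n^'n. invertible R \<and> P = R ** transpose R"
proof -
  obtain U d where oU: "orthogonal_matrix U" and A: "P = U ** diagm d ** transpose U" and d: "\<forall>j. d $ j > 0"
    using pos_spectral[OF assms] by blast
  define e :: "real^'n" where "e = (\<chi> i. sqrt (d $ i))"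
  define R where "R = U ** diagm e"
  have "R ** transpose R = U ** (diagm e ** diagm e) ** transpose U"
    by (simp add: R_def matrix_transpose_mul transpose_diagm matrix_mul_assoc)
  also have "diagm e ** diagm e = diagm d"
    using d by (simp add: diagm_mult e_def vec_eq_iff less_imp_le)
  finally have PR: "P = R ** transpose R" using A by simp
  have "\<forall>j. d $ j \<noteq> 0" using d by (metis less_irrefl)
  moreover have "det R \<noteq> 0" using calculation orth_det_sq[OF oU]
    by (auto simp: R_def det_mul det_diagm e_def)
  ultimately show ?thesis using PR by (auto simp: invertible_det_nz)
qed

definition Fobj :: "real^'n^'n \<Rightarrow> real^'n^'n \<Rightarrow> real" where
  "Fobj T S = ln (det S) + trace (matrix_inv S ** T)"

lemma Fobj_self:
  fixes T :: "real^'n^'n"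
  assumes "pos_def T"
  shows "Fobj T T = ln (det T) + real CARD('n)"
  using matrix_inv_props(2)[OF pos_def_invertible[OF assms]] by (simp add: Fobj_def trace_I)

lemma M1:
  fixes T S :: "real^'n^'n"
  assumes T: "pos_def T" and S: "pos_def S"
  shows "Fobj T T \<le> Fobj T S" and "Fobj T S = Fobj T T \<Longrightarrow> S = T"
proof -
  let ?P = "matrix_inv S"
  have P: "pos_def ?P" and dP: "det ?P = 1 / det S" using pos_def_inv[OF S] by auto
  have SP: "?P ** S = mat 1" using matrix_inv_props(2)[OF pos_def_invertible[OF S]] .
  obtain R :: "real^'n^'n" where iR: "invertible R" and PR: "?P = R ** transpose R" using pos_def_sqrt[OF P] by blast
  define M where "M = transpose R ** T ** R"
  have tT: "transpose T = T" using T by (simp add: pos_def_def)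
  have injR: "inj ((*v) R)" by (rule inj_matrix_vector_mult[OF iR])
  have "pos_def M"
  proof -
    have "transpose M = M" by (simp add: M_def matrix_transpose_mul tT matrix_mul_assoc)
    moreover have "v \<bullet> (M *v v) > 0" if v: "v \<noteq> 0" for v
    proof -
      have "R *v v \<noteq> 0" using injR v by (metis inj_eq matrix_vector_mult_0_right)
      then have "(R *v v) \<bullet> (T *v (R *v v)) > 0" using T by (simp add: pos_def_def)
      moreover have "v \<bullet> (M *v v) = (R *v v) \<bullet> (T *v (R *v v))"
        unfolding M_def matrix_vector_mul_assoc[symmetric] by (rule transpose_dot)
      ultimately show ?thesis by simp
    qed
    ultimately show ?thesis by (simp add: pos_def_def)
  qed
  note L = logdet_le[OF this]
  have dM: "det M = det ?P * det T" by (simp add: M_def PR det_mul)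
  have trM: "trace M = trace (?P ** T)"
  proof -
    have "trace M = trace (transpose R ** (T ** R))" by (simp add: M_def matrix_mul_assoc)
    also have "\<dots> = trace ((T ** R) ** transpose R)" by (rule trace_mul_sym)
    also have "\<dots> = trace (T ** ?P)" by (simp add: PR matrix_mul_assoc)
    also have "\<dots> = trace (?P ** T)" by (rule trace_mul_sym)
    finally show ?thesis .
  qed
  have dS: "det S > 0" and dT: "det T > 0" using pos_def_det_pos S T by auto
  have lnM: "ln (det M) = ln (det T) - ln (det S)"
    using dS dT by (simp add: dM dP ln_mult ln_div)
  have FS: "Fobj T S = ln (det S) + trace M" by (simp add: Fobj_def trM)
  show "Fobj T T \<le> Fobj T S" using L(1) by (simp add: Fobj_self[OF T] FS lnM)
  assume "Fobj T S = Fobj T T"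
  then have "ln (det M) = trace M - real CARD('n)" by (simp add: Fobj_self[OF T] FS lnM)
  then have "M = mat 1" by (rule L(2))
  then have "transpose R ** (T ** R) = mat 1" by (simp add: M_def matrix_mul_assoc)
  then have "(T ** R) ** transpose R = mat 1" by (simp add: matrix_left_right_inverse)
  then have TP: "T ** ?P = mat 1" by (simp add: PR matrix_mul_assoc)
  have "T = T ** (?P ** S)" by (simp add: SP)
  also have "\<dots> = (T ** ?P) ** S" by (simp add: matrix_mul_assoc)
  also have "\<dots> = S" by (simp add: TP)
  finally show "S = T" by simp
qed


lemma pos_def_diag_pos:
  fixes Q :: "real^'n^'n"
  assumes "pos_def Q" shows "Q $ i $ i > 0"
proof -
  have "axis i (1::real) \<noteq> 0" by (simp add: axis_eq_0_iff)
  then have "axis i 1 \<bullet> (Q *v axis i 1) > 0" using assms by (simp add: pos_def_def)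
  then show ?thesis by (simp add: matrix_vector_mult_basis inner_axis' column_def)
qed

lemma pos_def_trace_pos:
  fixes Q :: "real^'n^'n"
  assumes "pos_def Q" shows "trace Q > 0"
  unfolding trace_def using pos_def_diag_pos[OF assms] by (simp add: sum_pos)

lemma M2:
  fixes T S :: "real^'n^'n"
  assumes tT: "transpose T = T" and psd: "\<forall>v. v \<bullet> (T *v v) \<ge> 0"
    and v: "v \<noteq> 0" "T *v v = 0" and S: "pos_def S"
  shows "\<exists>S'. pos_def S' \<and> Fobj T S' < Fobj T S"
proof -
  define Se where "Se e = T + e *\<^sub>R mat 1" for e :: real
  have pd: "pos_def (Se e)" if e: "e > 0" for e
  proof -
    have "transpose (Se e) = Se e" using tT
      by (simp add: Se_def vec_eq_iff transpose_def mat_def)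
    moreover have "w \<bullet> (Se e *v w) > 0" if w: "w \<noteq> 0" for w
    proof -
      have "Se e *v w = T *v w + e *\<^sub>R w"
        by (simp add: Se_def matrix_vector_mult_add_rdistrib scaleR_matrix_vector_assoc[symmetric])
      then have "w \<bullet> (Se e *v w) = w \<bullet> (T *v w) + e * (w \<bullet> w)" by (simp add: inner_add_right)
      moreover have "w \<bullet> w > 0" using w by simp
      ultimately show ?thesis using psd e by (metis add_nonneg_pos mult_pos_pos)
    qed
    ultimately show ?thesis by (simp add: pos_def_def)
  qed
  have Fle: "Fobj T (Se e) \<le> ln (det (Se e)) + real CARD('n)" if e: "e > 0" for e
  proof -
    let ?Q = "matrix_inv (Se e)"
    have Q: "pos_def ?Q" using pos_def_inv(1)[OF pd[OF e]] .
    have QS: "?Q ** Se e = mat 1" using matrix_inv_props(2)[OF pos_def_invertible[OF pd[OF e]]] .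
    have "?Q ** Se e = ?Q ** T + e *\<^sub>R ?Q"
      by (simp add: Se_def matrix_add_ldistrib matrix_scalar_ac)
    then have "?Q ** T = mat 1 - e *\<^sub>R ?Q" using QS by (simp add: eq_diff_eq)
    then have "trace (?Q ** T) = trace (mat 1 :: real^'n^'n) - e * trace ?Q"
      by (simp add: trace_def sum_distrib_left sum_subtractf)
    also have "\<dots> \<le> real CARD('n)" using pos_def_trace_pos[OF Q] e by (simp add: trace_I)
    finally show ?thesis by (simp add: Fobj_def)
  qed
  have dT: "det T = 0"
  proof (rule ccontr)
    assume "det T \<noteq> 0"
    then have "inj ((*v) T)" by (simp add: inj_matrix_vector_mult invertible_det_nz)
    then show False using v by (metis injD matrix_vector_mult_0_right)
  qed
  define g where "g e = det (Se e)" for e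
  have geq: "g = (\<lambda>e. \<Sum>p\<in>{p. p permutes (UNIV::'n set)}. of_int (sign p) * (\<Prod>i\<in>UNIV. T $ i $ p i + e * (if i = p i then 1 else 0)))"
    by (simp add: fun_eq_iff g_def Se_def det_def mat_def)
  have "isCont g 0" unfolding geq by (intro continuous_intros)
  then have "(g \<longlongrightarrow> g 0) (at_right 0)"
    using isCont_def tendsto_mono[OF at_le[OF subset_UNIV]] by blast
  moreover have "g 0 = 0" by (simp add: g_def Se_def dT)
  ultimately have lim: "(g \<longlongrightarrow> 0) (at_right 0)" by simp
  define z where "z = Fobj T S - real CARD('n)"
  have "eventually (\<lambda>e. g e < exp z) (at_right 0)"
    using order_tendstoD(2)[OF lim] by simp
  then obtain b where b: "b > 0" and bP: "\<And>y. y > 0 \<Longrightarrow> y < b \<Longrightarrow> g y < exp z"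
    unfolding eventually_at_right_field by auto
  define e where "e = b / 2"
  have e: "e > 0" "e < b" using b by (auto simp: e_def)
  have gpos: "g e > 0" unfolding g_def using pos_def_det_pos[OF pd[OF e(1)]] .
  have "ln (g e) < z" using bP[OF e] gpos by (metis ln_exp ln_less_cancel_iff exp_gt_zero)
  then have "Fobj T (Se e) < Fobj T S" using Fle[OF e(1)] by (simp add: g_def z_def)
  then show ?thesis using pd[OF e(1)] by blast
qed




definition Gm :: "nat \<Rightarrow> real" where
  "Gm k = (if even k then sqrt pi / 2 * (fact k / (2 ^ k * fact (k div 2))) else fact (k div 2) / 2)"

lemma Gm_int: "has_bochner_integral lborel (\<lambda>x::real. indicator {0..} x *\<^sub>R (exp (-x\<^sup>2) * x ^ k)) (Gm k)"
proof (cases "even k")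
  case True
  then obtain j where k: "k = 2 * j" by (auto elim: evenE)
  show ?thesis using gaussian_moment_even_pos[of j] by (simp add: Gm_def k)
next
  case False
  then obtain j where k: "k = 2 * j + 1" by (auto elim: oddE)
  show ?thesis using gaussian_moment_odd_pos[of j] by (simp add: Gm_def k)
qed

lemma Gm_pos: "Gm k > 0"
  by (simp add: Gm_def)

lemma Gm_rec: "Gm (k + 2) = (real k + 1) / 2 * Gm k"
proof (cases "even k")
  case True
  then obtain j where k: "k = 2 * j" by (auto elim: evenE)
  define p where "p = real j + 1"
  have p: "p > 0" by (simp add: p_def)
  have f1: "fact (2 * j + 2) = (2 * p) * (real (2 * j) + 1) * (fact (2 * j) :: real)"
    by (simp add: fact_Suc numeral_2_eq_2 algebra_simps p_def)
  have f2: "fact (j + 1) = p * (fact j :: real)" by (simp add: algebra_simps p_def)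
  have kd: "(2 * j + 2) div 2 = j + 1" by simp
  have "Gm (k + 2) = sqrt pi / 2 * (fact (2 * j + 2) / (2 ^ (2 * j + 2) * fact (j + 1)))"
    by (simp add: Gm_def k kd)
  also have "\<dots> = sqrt pi / 2 * ((2 * p) * (real (2 * j) + 1) * fact (2 * j) / (2 ^ (2 * j + 2) * (p * fact j)))"
    by (simp only: f1 f2)
  also have "\<dots> = (real (2 * j) + 1) / 2 * (sqrt pi / 2 * (fact (2 * j) / (2 ^ (2 * j) * fact j)))"
  proof -
    have aux: "Y' = 4 * Y \<Longrightarrow> Y > 0 \<Longrightarrow> Z > 0 \<Longrightarrow> s / 2 * ((2 * p) * q * X / (Y' * (p * Z))) = q / 2 * (s / 2 * (X / (Y * Z)))"
      for Y Y' Z s q X :: real using p by (simp add: field_simps)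
    show ?thesis by (rule aux) (auto simp: power_add)
  qed
  also have "\<dots> = (real k + 1) / 2 * Gm k" by (simp add: Gm_def k)
  finally show ?thesis .
next
  case False
  then obtain j where k: "k = 2 * j + 1" by (auto elim: oddE)
  have kd: "(2 * j + 1 + 2) div 2 = j + 1" by simp
  have "fact (j + 1) = (real j + 1) * (fact j :: real)" by (simp add: algebra_simps)
  then show ?thesis using False
    by (simp add: Gm_def k kd field_simps)
qed

lemma Gm_rec': "Gm (Suc (Suc k)) = (real k + 1) / 2 * Gm k"
  using Gm_rec[of k] by simp

definition Jm :: "real \<Rightarrow> nat \<Rightarrow> real" where
  "Jm a k = sqrt (2 / a) ^ (k + 1) * Gm k"

lemma Jm_pos: "a > 0 \<Longrightarrow> Jm a k > 0"
  by (simp add: Jm_def Gm_pos)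

lemma Jm_rec: "a > 0 \<Longrightarrow> Jm a (k + 2) = (real k + 1) / a * Jm a k"
proof -
  assume a: "a > 0"
  have s2: "sqrt (2 / a) ^ 2 = 2 / a" using a by simp
  have "Jm a (k + 2) = sqrt (2 / a) ^ 2 * sqrt (2 / a) ^ (k + 1) * Gm (k + 2)"
    by (simp add: Jm_def power_add[symmetric] algebra_simps)
  also have "\<dots> = (2 / a) * ((real k + 1) / 2) * (sqrt (2 / a) ^ (k + 1) * Gm k)"
    by (simp only: s2 Gm_rec mult_ac)
  also have "\<dots> = (real k + 1) / a * Jm a k"
    unfolding Jm_def using a by (simp add: divide_simps)
  finally show ?thesis .
qed

lemma Jm_int:
  assumes a: "a > 0"
  shows "has_bochner_integral lborel (\<lambda>r::real. indicator {0<..} r *\<^sub>R (r ^ k * exp (- (r\<^sup>2 / 2) * a))) (Jm a k)"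
proof -
  define c where "c = sqrt (2 / a)"
  have c: "c > 0" using a by (simp add: c_def)
  have c2: "c\<^sup>2 = 2 / a" using a by (simp add: c_def)
  have "has_bochner_integral lborel (\<lambda>x. (\<lambda>x::real. indicator {0..} x *\<^sub>R (exp (-x\<^sup>2) * x ^ k)) (0 + (1 / c) * x)) (Gm k /\<^sub>R \<bar>1 / c\<bar>)"
    using Gm_int[of k] c by (subst (asm) lborel_has_bochner_integral_real_affine_iff[where c="1/c" and t=0]) auto
  then have "has_bochner_integral lborel (\<lambda>x. c ^ k * (indicator {0..} (x / c) *\<^sub>R (exp (-(x / c)\<^sup>2) * (x / c) ^ k))) (c ^ k * (c * Gm k))"
    using c by (intro has_bochner_integral_mult_right) simp
  moreover have "c ^ k * (c * Gm k) = Jm a k" by (simp add: Jm_def c_def)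
  ultimately have H: "has_bochner_integral lborel (\<lambda>x. c ^ k * (indicator {0..} (x / c) *\<^sub>R (exp (-(x / c)\<^sup>2) * (x / c) ^ k))) (Jm a k)" by simp
  have AE: "AE x in lborel. c ^ k * (indicator {0..} (x / c) *\<^sub>R (exp (-(x / c)\<^sup>2) * (x / c) ^ k)) = indicator {0<..} x *\<^sub>R (x ^ k * exp (- (x\<^sup>2 / 2) * a))"
    using AE_lborel_singleton[of 0]
  proof eventually_elim
    case (elim x)
    have "(x / c)\<^sup>2 = x\<^sup>2 / c\<^sup>2" by (simp add: power_divide)
    also have "\<dots> = x\<^sup>2 / 2 * a" using a by (simp add: c2)
    finally have e: "(x / c)\<^sup>2 = x\<^sup>2 / 2 * a" .
    have e2: "x\<^sup>2 * 2 / c\<^sup>2 = x\<^sup>2 * a" using a by (simp add: c2)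
    have i: "indicator {0..} (x / c) = (indicator {0<..} x :: real)"
      using elim c by (auto simp: indicator_def field_simps)
    show ?case using c by (simp add: e e2 i power_divide)
  qed
  show ?thesis
    by (rule has_bochner_integral_cong_AE[THEN iffD1, OF _ _ AE H]) measurable
qed





definition Cx :: "real^'n^'n \<Rightarrow> real^'n \<Rightarrow> real" where
  "Cx Sk x = (let a = x \<bullet> (matrix_inv Sk *v x) in
     (1 / Jm a (CARD('n) - 1)) * (LINT r|lborel. indicator {0<..} r *\<^sub>R
        (real (CARD('n) - 1) * (r ^ (CARD('n) - 1) * ln r) * exp (- (r\<^sup>2 / 2) * a))))"

lemma log_bound:
  fixes r :: real and N :: nat
  assumes r: "r > 0"
  shows "\<bar>real N * (r ^ N * ln r)\<bar> \<le> real N * (r ^ (N - 1) + r ^ (N + 1))"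
proof (cases "N = 0")
  case True then show ?thesis by simp
next
  case False
  then obtain M where N: "N = Suc M" by (cases N) auto
  have "\<bar>r ^ N * ln r\<bar> \<le> r ^ (N - 1) + r ^ (N + 1)"
  proof (cases "r \<le> 1")
    case True
    have "ln r \<le> 0" using True r by simp
    moreover have "ln (1 / r) \<le> 1 / r - 1" using r by (intro ln_le_minus_one) simp
    then have "- ln r \<le> 1 / r" using r by (simp add: ln_div)
    ultimately have "\<bar>ln r\<bar> \<le> 1 / r" by simp
    then have "r ^ N * \<bar>ln r\<bar> \<le> r ^ N * (1 / r)" using r by (intro mult_left_mono) auto
    also have "r ^ N * (1 / r) = r ^ (N - 1)" using r by (simp add: N)
    finally have "r ^ N * \<bar>ln r\<bar> \<le> r ^ (N - 1)" .
    moreover have "0 \<le> r ^ (N + 1)" using r by simp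
    moreover have "\<bar>r ^ N * ln r\<bar> = r ^ N * \<bar>ln r\<bar>" using r by (simp add: abs_mult)
    ultimately show ?thesis by linarith
  next
    case False
    then have "ln r \<ge> 0" by simp
    moreover have "ln r \<le> r - 1" using r by (rule ln_le_minus_one)
    ultimately have "\<bar>ln r\<bar> \<le> r" by simp
    then have "r ^ N * \<bar>ln r\<bar> \<le> r ^ N * r" using r by (intro mult_left_mono) auto
    also have "r ^ N * r = r ^ (N + 1)" by simp
    finally have "r ^ N * \<bar>ln r\<bar> \<le> r ^ (N + 1)" .
    moreover have "0 \<le> r ^ (N - 1)" using r by simp
    moreover have "\<bar>r ^ N * ln r\<bar> = r ^ N * \<bar>ln r\<bar>" using r by (simp add: abs_mult)
    ultimately show ?thesis by linarith
  qed
  then have "real N * \<bar>r ^ N * ln r\<bar> \<le> real N * (r ^ (N - 1) + r ^ (N + 1))"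
    by (intro mult_left_mono) auto
  then show ?thesis by (simp add: abs_mult)
qed

lemma h1_integrable:
  assumes a: "a > 0"
  shows "integrable lborel (\<lambda>r::real. indicator {0<..} r *\<^sub>R (real N * (r ^ N * ln r) * exp (- (r\<^sup>2 / 2) * a)))"
proof (rule Bochner_Integration.integrable_bound)
  let ?g = "\<lambda>r::real. real N * (indicator {0<..} r *\<^sub>R (r ^ (N - 1) * exp (- (r\<^sup>2 / 2) * a))
     + indicator {0<..} r *\<^sub>R (r ^ (N + 1) * exp (- (r\<^sup>2 / 2) * a)))"
  have i1: "integrable lborel (\<lambda>r::real. indicator {0<..} r *\<^sub>R (r ^ (N - 1) * exp (- (r\<^sup>2 / 2) * a)))"
    by (rule integrable.intros[OF Jm_int[OF a]])
  have i2: "integrable lborel (\<lambda>r::real. indicator {0<..} r *\<^sub>R (r ^ (N + 1) * exp (- (r\<^sup>2 / 2) * a)))"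
    by (rule integrable.intros[OF Jm_int[OF a]])
  show "integrable lborel ?g"
    by (intro integrable_mult_right Bochner_Integration.integrable_add i1 i2)
  show "(\<lambda>r::real. indicator {0<..} r *\<^sub>R (real N * (r ^ N * ln r) * exp (- (r\<^sup>2 / 2) * a))) \<in> borel_measurable lborel"
    by measurable
  show "AE r in lborel. norm (indicator {0<..} r *\<^sub>R (real N * (r ^ N * ln r) * exp (- (r\<^sup>2 / 2) * a))) \<le> norm (?g r)"
  proof (rule AE_I2)
    fix r :: real
    show "norm (indicator {0<..} r *\<^sub>R (real N * (r ^ N * ln r) * exp (- (r\<^sup>2 / 2) * a))) \<le> norm (?g r)"
    proof (cases "r > 0")
      case True
      have "\<bar>real N * (r ^ N * ln r) * exp (- (r\<^sup>2 / 2) * a)\<bar> = \<bar>real N * (r ^ N * ln r)\<bar> * exp (- (r\<^sup>2 / 2) * a)"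
        by (simp add: abs_mult)
      also have "\<dots> \<le> real N * (r ^ (N - 1) + r ^ (N + 1)) * exp (- (r\<^sup>2 / 2) * a)"
        by (intro mult_right_mono log_bound True) auto
      also have "\<dots> = \<bar>real N * (r ^ (N - 1) * exp (- (r\<^sup>2 / 2) * a) + r ^ (N + 1) * exp (- (r\<^sup>2 / 2) * a))\<bar>"
        using True by (simp add: algebra_simps)
      finally show ?thesis using True by simp
    next
      case False then show ?thesis by simp
    qed
  qed
qed


lemma em_term:
  fixes Sk S :: "real^'n^'n" and x :: "real^'n"
  assumes Sk: "pos_def Sk" and S: "pos_def S" and x: "x \<noteq> 0"
  shows "(LINT r:{0<..}|lborel. lv_cond Sk x r * ln (lv_joint S x r)) =
     Cx Sk x - ln ((2 * pi) powr (real CARD('n) / 2) * sqrt (det S))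
       - real CARD('n) / (2 * (x \<bullet> (matrix_inv Sk *v x))) * (x \<bullet> (matrix_inv S *v x))"
proof -
  define n where "n = CARD('n)"
  define N where "N = n - 1"
  have n1: "n \<ge> 1" by (simp add: n_def Suc_leI)
  have nN: "real n = real N + 1" using n1 by (simp add: N_def)
  define a where "a = x \<bullet> (matrix_inv Sk *v x)"
  have a: "a > 0" using pos_def_inv(1)[OF Sk] x by (simp add: pos_def_def a_def)
  define q where "q = x \<bullet> (matrix_inv S *v x)"
  define K where "K = (2 * pi) powr (real n / 2)"
  have K: "K > 0" by (simp add: K_def)
  define Dk where "Dk = sqrt (det Sk)"
  have Dk: "Dk > 0" using pos_def_det_pos[OF Sk] by (simp add: Dk_def)
  define D where "D = sqrt (det S)"
  have D: "D > 0" using pos_def_det_pos[OF S] by (simp add: D_def)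
  define J where "J = Jm a N"
  have J: "J > 0" using Jm_pos[OF a] by (simp add: J_def)
  define e where "e r = exp (- (r\<^sup>2 / 2) * a)" for r :: real
  have joint_k: "lv_joint Sk x r = r ^ N / (K * Dk) * e r" for r
    by (simp add: lv_joint_def N_def n_def K_def Dk_def e_def a_def)
  have "has_bochner_integral lborel (\<lambda>r. 1 / (K * Dk) * (indicator {0<..} r *\<^sub>R (r ^ N * exp (- (r\<^sup>2 / 2) * a)))) (1 / (K * Dk) * J)"
    unfolding J_def by (rule has_bochner_integral_mult_right[OF Jm_int[OF a]])
  moreover have "(\<lambda>r. 1 / (K * Dk) * (indicator {0<..} r *\<^sub>R (r ^ N * exp (- (r\<^sup>2 / 2) * a)))) =
      (\<lambda>r. indicator {0<..} r *\<^sub>R lv_joint Sk x r)"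
    by (simp add: fun_eq_iff joint_k e_def)
  ultimately have "has_bochner_integral lborel (\<lambda>r. indicator {0<..} r *\<^sub>R lv_joint Sk x r) (J / (K * Dk))"
    by simp
  then have Z: "(LINT t:{0<..}|lborel. lv_joint Sk x t) = J / (K * Dk)"
    unfolding set_lebesgue_integral_def by (rule has_bochner_integral_integral_eq)
  have cond: "lv_cond Sk x r = r ^ N * e r / J" for r
    unfolding lv_cond_def Z using K Dk J by (simp add: joint_k field_simps)
  have lnj: "ln (lv_joint S x r) = real N * ln r - ln (K * D) - r\<^sup>2 / 2 * q" if r: "r > 0" for r
  proof -
    have "lv_joint S x r = r ^ N / (K * D) * exp (- (r\<^sup>2 / 2) * q)"
      by (simp add: lv_joint_def N_def n_def K_def D_def q_def)
    also have "ln \<dots> = ln (r ^ N) - ln (K * D) + (- (r\<^sup>2 / 2) * q)"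
      using r K D by (simp add: ln_mult ln_div)
    finally show ?thesis using r by (simp add: ln_realpow)
  qed
  define h1 where "h1 r = indicator {0<..} r *\<^sub>R (real N * (r ^ N * ln r) * exp (- (r\<^sup>2 / 2) * a))" for r :: real
  define I1 where "I1 = (LINT r|lborel. h1 r)"
  have H1: "has_bochner_integral lborel h1 I1"
    unfolding I1_def h1_def by (rule has_bochner_integral_integrable[OF h1_integrable[OF a]])
  have H0: "has_bochner_integral lborel (\<lambda>r. indicator {0<..} r *\<^sub>R (r ^ N * exp (- (r\<^sup>2 / 2) * a))) J"
    unfolding J_def by (rule Jm_int[OF a])
  have H2: "has_bochner_integral lborel (\<lambda>r. indicator {0<..} r *\<^sub>R (r ^ (N + 2) * exp (- (r\<^sup>2 / 2) * a))) ((real N + 1) / a * J)"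
    using Jm_int[OF a, of "N + 2"] unfolding Jm_rec[OF a] J_def by simp
  have HB: "has_bochner_integral lborel
     (\<lambda>r. 1 / J * h1 r - ln (K * D) / J * (indicator {0<..} r *\<^sub>R (r ^ N * exp (- (r\<^sup>2 / 2) * a)))
         - q / (2 * J) * (indicator {0<..} r *\<^sub>R (r ^ (N + 2) * exp (- (r\<^sup>2 / 2) * a))))
     (1 / J * I1 - ln (K * D) / J * J - q / (2 * J) * ((real N + 1) / a * J))"
    by (intro has_bochner_integral_diff has_bochner_integral_mult_right H0 H1 H2)
  have feq: "(\<lambda>r. 1 / J * h1 r - ln (K * D) / J * (indicator {0<..} r *\<^sub>R (r ^ N * exp (- (r\<^sup>2 / 2) * a)))
         - q / (2 * J) * (indicator {0<..} r *\<^sub>R (r ^ (N + 2) * exp (- (r\<^sup>2 / 2) * a)))) =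
     (\<lambda>r. indicator {0<..} r *\<^sub>R (lv_cond Sk x r * ln (lv_joint S x r)))"
  proof
    fix r :: real
    show "1 / J * h1 r - ln (K * D) / J * (indicator {0<..} r *\<^sub>R (r ^ N * exp (- (r\<^sup>2 / 2) * a)))
         - q / (2 * J) * (indicator {0<..} r *\<^sub>R (r ^ (N + 2) * exp (- (r\<^sup>2 / 2) * a))) =
       indicator {0<..} r *\<^sub>R (lv_cond Sk x r * ln (lv_joint S x r))"
    proof (cases "r > 0")
      case True
      show ?thesis using True J
        by (simp add: h1_def cond lnj e_def field_simps power_add power2_eq_square)
    next
      case False then show ?thesis by (simp add: h1_def)
    qed
  qed
  have "(LINT r:{0<..}|lborel. lv_cond Sk x r * ln (lv_joint S x r)) =
        1 / J * I1 - ln (K * D) / J * J - q / (2 * J) * ((real N + 1) / a * J)"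
    unfolding set_lebesgue_integral_def using has_bochner_integral_integral_eq[OF HB[unfolded feq]] .
  also have "\<dots> = Cx Sk x - ln (K * D) - real n / (2 * a) * q"
  proof -
    have "Cx Sk x = 1 / J * I1"
      by (simp add: Cx_def Let_def a_def[symmetric] N_def n_def J_def I1_def h1_def)
    then show ?thesis using J a by (simp add: nN field_simps)
  qed
  finally show ?thesis by (simp add: K_def D_def n_def a_def q_def)
qed




lemma mv_sum: "(\<Sum>k<m. f k) *v (v::real^'n) = (\<Sum>k<m. f k *v v)"
  for f :: "nat \<Rightarrow> real^'n^'n"
  by (induction m) (simp_all add: matrix_vector_mult_add_rdistrib)

lemma tr_sum: "trace (P ** (\<Sum>k<m. f k)) = (\<Sum>k<m. trace (P ** f k))"
  for f :: "nat \<Rightarrow> real^'n^'n" and P :: "real^'n^'n"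
proof (induction m)
  case 0 then show ?case by (simp add: trace_def matrix_matrix_mult_def)
next
  case (Suc m) then show ?case by (simp add: matrix_add_ldistrib trace_add)
qed

lemma tr_scale: "trace (P ** (c *\<^sub>R A)) = c * trace (P ** A)"
  for P A :: "real^'n^'n"
  by (simp add: trace_def matrix_matrix_mult_def sum_distrib_left vector_scaleR_component mult_ac)

lemma tr_outer: "trace (P ** (\<chi> a b. y $ a * y $ b)) = y \<bullet> (P *v y)"
  for P :: "real^'n^'n"
  by (simp add: trace_def matrix_matrix_mult_def inner_vec_def matrix_vector_mult_def sum_distrib_left mult_ac)

lemma outer_mv: "(\<chi> a b. y $ a * y $ b) *v v = (y \<bullet> v) *\<^sub>R (y::real^'n)"
  by (simp add: vec_eq_iff matrix_vector_mult_def inner_vec_def sum_distrib_left sum_distrib_right mult_ac)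

theorem proposition1:
  fixes x :: "nat \<Rightarrow> real^'n" and m :: nat and Sk :: "real^'n^'n"
  assumes "m \<ge> 1"
    and "\<forall>i<m. norm (x i) = 1"
    and "pos_def Sk"
  shows "\<forall>S. pos_def S \<longrightarrow> (is_em_update x m Sk S \<longleftrightarrow> S = tyler_step x m Sk)"
proof (intro allI impI)
  fix S :: "real^'n^'n" assume S: "pos_def S"
  have m: "real m > 0" using assms(1) by simp
  have Sk: "pos_def Sk" by (rule assms(3))
  define n where "n = CARD('n)"
  define T where "T = tyler_step x m Sk"
  define a where "a i = x i \<bullet> (matrix_inv Sk *v x i)" for i
  define K where "K = (2 * pi) powr (real n / 2)"
  have K: "K > 0" by (simp add: K_def)
  have xnz: "x i \<noteq> 0" if "i < m" for i using assms(2) that by auto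
  have apos: "a i > 0" if "i < m" for i
    using pos_def_inv(1)[OF Sk] xnz[OF that] by (simp add: pos_def_def a_def)
  define X where "X i = (\<chi> a b. x i $ a * x i $ b)" for i
  have Tdef: "T = (real n / real m) *\<^sub>R (\<Sum>i<m. (1 / a i) *\<^sub>R X i)"
    by (simp add: T_def tyler_step_def n_def a_def X_def)
  define C0 where "C0 = (\<Sum>i<m. Cx Sk (x i)) - real m * ln K"
  have trT: "trace (matrix_inv S' ** T) = real n / real m * (\<Sum>i<m. 1 / a i * (x i \<bullet> (matrix_inv S' *v x i)))" for S'
    by (simp add: Tdef tr_scale tr_sum tr_outer X_def)
  have Q: "em_Q x m Sk S' = C0 - real m / 2 * Fobj T S'" if S': "pos_def S'" for S'
  proof -
    have dS': "det S' > 0" using pos_def_det_pos[OF S'] .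
    have "em_Q x m Sk S' = (\<Sum>i<m. Cx Sk (x i) - ln (K * sqrt (det S'))
         - real n / (2 * a i) * (x i \<bullet> (matrix_inv S' *v x i)))"
      unfolding em_Q_def
      by (intro sum.cong refl) (simp add: em_term[OF Sk S' xnz] K_def n_def a_def)
    also have "\<dots> = (\<Sum>i<m. Cx Sk (x i)) - real m * (ln K + ln (det S') / 2)
         - real n / 2 * (\<Sum>i<m. 1 / a i * (x i \<bullet> (matrix_inv S' *v x i)))"
      using K dS' by (simp add: sum_subtractf sum_distrib_left ln_mult ln_sqrt)
    also have "\<dots> = C0 - real m / 2 * Fobj T S'"
      using m by (simp add: C0_def Fobj_def trT field_simps)
    finally show ?thesis .
  qed
  have tT: "transpose T = T"
    by (simp add: Tdef X_def vec_eq_iff transpose_def sum_component mult.commute)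
  have Tv: "T *v v = (real n / real m) *\<^sub>R (\<Sum>i<m. (1 / a i * (x i \<bullet> v)) *\<^sub>R x i)" for v
    by (simp add: Tdef scaleR_matrix_vector_assoc[symmetric] mv_sum X_def outer_mv)
  have vTv: "v \<bullet> (T *v v) = real n / real m * (\<Sum>i<m. 1 / a i * (x i \<bullet> v)\<^sup>2)" for v
    by (simp add: Tv inner_sum_right power2_eq_square inner_commute mult_ac)
  have terms_nn: "0 \<le> 1 / a i * (x i \<bullet> v)\<^sup>2" if "i < m" for i v
    using apos[OF that] by simp
  have psd: "\<forall>v. v \<bullet> (T *v v) \<ge> 0"
  proof
    fix v
    have "0 \<le> (\<Sum>i<m. 1 / a i * (x i \<bullet> v)\<^sup>2)" by (intro sum_nonneg terms_nn) simp
    then show "v \<bullet> (T *v v) \<ge> 0" using m unfolding vTv by simp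
  qed
  show "is_em_update x m Sk S \<longleftrightarrow> S = tyler_step x m Sk"
  proof (cases "pos_def T")
    case True
    have upd: "is_em_update x m Sk S \<longleftrightarrow> (\<forall>S'. pos_def S' \<longrightarrow> Fobj T S \<le> Fobj T S')"
      using S m by (auto simp: is_em_update_def Q)
    show ?thesis
    proof
      assume "is_em_update x m Sk S"
      then have "Fobj T S \<le> Fobj T T" using upd True by blast
      then have "Fobj T S = Fobj T T" using M1(1)[OF True S] by simp
      then show "S = tyler_step x m Sk" using M1(2)[OF True S] by (simp add: T_def)
    next
      assume "S = tyler_step x m Sk"
      then have "S = T" by (simp add: T_def)
      then show "is_em_update x m Sk S" using upd M1(1)[OF True] by auto
    qed
  next
    case False
    then obtain v where v: "v \<noteq> 0" "\<not> v \<bullet> (T *v v) > 0"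
      using tT by (auto simp: pos_def_def)
    then have "v \<bullet> (T *v v) = 0" using psd by (meson not_le order_antisym)
    moreover have "n > 0" by (simp add: n_def)
    ultimately have "(\<Sum>i<m. 1 / a i * (x i \<bullet> v)\<^sup>2) = 0" using m by (simp add: vTv)
    then have "\<forall>i\<in>{..<m}. 1 / a i * (x i \<bullet> v)\<^sup>2 = 0"
      using terms_nn by (subst (asm) sum_nonneg_eq_0_iff) auto
    then have "\<forall>i<m. x i \<bullet> v = 0" using apos by fastforce
    then have Tv0: "T *v v = 0" by (simp add: Tv)
    obtain S' where S': "pos_def S'" and lt: "Fobj T S' < Fobj T S"
      using M2[OF tT psd v(1) Tv0 S] by blast
    have "em_Q x m Sk S < em_Q x m Sk S'" using Q[OF S] Q[OF S'] lt m by simp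
    then have "\<not> is_em_update x m Sk S" using S' by (auto simp: is_em_update_def)
    moreover have "S \<noteq> tyler_step x m Sk" using S False by (auto simp: T_def)
    ultimately show ?thesis by simp
  qed
qed


end
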